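(* Let $G$ be a finite group acting on a set $S$ via $\bullet: G\times S\to S$ (so $(gh)\bullet x=g\bullet(h\bullet x)$), and let $F\le H\trianglelefteq G$. Let $A$ be a randomized algorithm which takes a list of elements of $G$ and outputs an element of $S$. Define the randomized algorithm $B$ on input $g_1,\dots,g_n\in G$ ($n\ge 2$): sample $f$ uniformly from $F$, compute $(g_1',\dots,g_n')\gets\textsc{Kilian}_H(fg_1,g_2,\dots,g_n)$, and return $f^{-1}\bullet A(g_1',\dots,g_n')$. Then the output distribution of $B(g_1,\dots,g_n)$ is $(g_1\cdots g_n)\bullet\mathcal D$, where $\mathcal D=\mathcal D(Fg_1\cdots g_n,g_1H,\dots,g_nH)$ is the uniform average, over all tuples $(g_1',\dots,g_n')\in G^n$ with $g_1'\cdots g_n'\in Fg_1\cdots g_n$ and $g_i'H=g_iH$ for all $i$, of the distribution of $(g_1'\cdots g_n')^{-1}\bullet A(g_1',\dots,g_n')$.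
   Context: $\textsc{Kilian}_H(g_1,\dots,g_n)$ (for $H\trianglelefteq G$, $n\ge 2$): sample $h_1,\dots,h_{n-1}$ independently and uniformly from $H$; set $g_1'=g_1h_1$, $g_i'=h_{i-1}^{-1}g_ih_i$ for $i=2,\dots,n-1$, and $g_n'=h_{n-1}^{-1}g_n$; return $(g_1',\dots,g_n')$. For a distribution $\mathcal D$ on $S$ and $g\in G$, $g\bullet\mathcal D$ denotes the distribution of $g\bullet x$ for $x\sim\mathcal D$. *)

theory Defs
  imports "HOL-Algebra.Group_Action" "HOL-Algebra.Coset" "HOL-Probability.Product_PMF"
begin

definition gprod :: "('g, 'b) monoid_scheme \<Rightarrow> 'g list \<Rightarrow> 'g" where
  "gprod G gs = foldr (\<lambda>a b. a \<otimes>\<^bsub>G\<^esub> b) gs \<one>\<^bsub>G\<^esub>"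

definition kilian :: "('g, 'b) monoid_scheme \<Rightarrow> 'g set \<Rightarrow> 'g list \<Rightarrow> 'g list pmf" where
  "kilian G H gs =
     map_pmf (\<lambda>hs. map (\<lambda>i.
         if i = 0 then (gs ! 0) \<otimes>\<^bsub>G\<^esub> hs 0
         else if i = length gs - 1 then inv\<^bsub>G\<^esub> (hs (i - 1)) \<otimes>\<^bsub>G\<^esub> (gs ! i)
         else inv\<^bsub>G\<^esub> (hs (i - 1)) \<otimes>\<^bsub>G\<^esub> (gs ! i) \<otimes>\<^bsub>G\<^esub> hs i)
       [0..<length gs])
     (Pi_pmf {..<length gs - 1} \<one>\<^bsub>G\<^esub> (\<lambda>_. pmf_of_set H))"

definition algB :: "('g, 'b) monoid_scheme \<Rightarrow> 'g set \<Rightarrow> 'g set \<Rightarrow> ('g \<Rightarrow> 's \<Rightarrow> 's)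
    \<Rightarrow> ('g list \<Rightarrow> 's pmf) \<Rightarrow> 'g list \<Rightarrow> 's pmf" where
  "algB G F H act A gs =
     do { f \<leftarrow> pmf_of_set F;
          gs' \<leftarrow> kilian G H ((f \<otimes>\<^bsub>G\<^esub> hd gs) # tl gs);
          map_pmf (act (inv\<^bsub>G\<^esub> f)) (A gs') }"

definition kil_tuples :: "('g, 'b) monoid_scheme \<Rightarrow> 'g set \<Rightarrow> 'g set \<Rightarrow> 'g list \<Rightarrow> 'g list set" where
  "kil_tuples G F H gs = {gs'. length gs' = length gs \<and> set gs' \<subseteq> carrier G \<and>
      gprod G gs' \<in> F #>\<^bsub>G\<^esub> gprod G gs \<and>
      (\<forall>i < length gs. (gs' ! i) <#\<^bsub>G\<^esub> H = (gs ! i) <#\<^bsub>G\<^esub> H)}"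

definition distD :: "('g, 'b) monoid_scheme \<Rightarrow> 'g set \<Rightarrow> 'g set \<Rightarrow> ('g \<Rightarrow> 's \<Rightarrow> 's)
    \<Rightarrow> ('g list \<Rightarrow> 's pmf) \<Rightarrow> 'g list \<Rightarrow> 's pmf" where
  "distD G F H act A gs =
     do { gs' \<leftarrow> pmf_of_set (kil_tuples G F H gs);
          map_pmf (act (inv\<^bsub>G\<^esub> (gprod G gs'))) (A gs') }"

end

theory Submission
  imports Defs
begin

context group
begin

lemma foldr_carr:
  assumes "set xs \<subseteq> carrier G"
  shows "foldr (\<lambda>a b. a \<otimes> b) xs \<one> \<in> carrier G"
  using assms by (induction xs) auto

lemma tele:
  assumes "\<And>i. i \<le> a + d \<Longrightarrow> k i \<in> carrier G" "\<And>i. i < a + d \<Longrightarrow> g i \<in> carrier G"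
  shows "foldr (\<lambda>a b. a \<otimes> b) (map (\<lambda>i. inv (k i) \<otimes> g i \<otimes> k (Suc i)) [a..<a+d]) \<one>
     = inv (k a) \<otimes> foldr (\<lambda>a b. a \<otimes> b) (map g [a..<a+d]) \<one> \<otimes> k (a + d)"
  using assms
proof (induction d arbitrary: a)
  case 0
  show ?case using 0 by simp
next
  case (Suc d)
  have e: "[a..<a + Suc d] = a # [Suc a..<Suc a + d]" by (simp add: upt_rec)
  have IH: "foldr (\<lambda>a b. a \<otimes> b) (map (\<lambda>i. inv (k i) \<otimes> g i \<otimes> k (Suc i)) [Suc a..<Suc a+d]) \<one>
     = inv (k (Suc a)) \<otimes> foldr (\<lambda>a b. a \<otimes> b) (map g [Suc a..<Suc a+d]) \<one> \<otimes> k (Suc a + d)"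
    using Suc.prems by (intro Suc.IH) auto
  have c: "foldr (\<lambda>a b. a \<otimes> b) (map g [Suc a..<Suc a+d]) \<one> \<in> carrier G"
    using Suc.prems by (intro foldr_carr) auto
  have ca: "k a \<in> carrier G" "g a \<in> carrier G" "k (Suc a) \<in> carrier G" "k (Suc a + d) \<in> carrier G"
    using Suc.prems by auto
  have cancel: "\<And>x y. x \<in> carrier G \<Longrightarrow> y \<in> carrier G \<Longrightarrow> x \<otimes> (inv x \<otimes> y) = y"
    by (simp add: m_assoc[symmetric])
  show ?case unfolding e using IH c ca by (simp del: upt_Suc add: m_assoc cancel)
qed

lemma lcos_eq_iff:
  assumes "subgroup H G" "x \<in> carrier G" "y \<in> carrier G"
  shows "(x <#\<^bsub>G\<^esub> H = y <#\<^bsub>G\<^esub> H) = (inv x \<otimes> y \<in> H)"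
proof
  assume eq: "x <#\<^bsub>G\<^esub> H = y <#\<^bsub>G\<^esub> H"
  have "y \<in> y <#\<^bsub>G\<^esub> H" using assms subgroup.one_closed[OF assms(1)] unfolding l_coset_def by force
  then obtain h where "h \<in> H" "y = x \<otimes> h" using eq unfolding l_coset_def by auto
  then show "inv x \<otimes> y \<in> H" using assms subgroup.mem_carrier[OF assms(1)]
    by (simp add: m_assoc[symmetric])
next
  assume "inv x \<otimes> y \<in> H"
  then have "y \<in> x <#\<^bsub>G\<^esub> H" using subgroup.lcos_module_rev[OF assms(1) is_group assms(2,3)] by simp
  then show "x <#\<^bsub>G\<^esub> H = y <#\<^bsub>G\<^esub> H" using l_repr_independence assms by blast
qed

lemma main_aux:
  assumes fin: "finite (carrier G)" and act: "group_action G S act"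
    and F: "subgroup F G" and FH: "F \<subseteq> H" and H: "H \<lhd> G"
    and AS: "\<And>xs. set xs \<subseteq> carrier G \<Longrightarrow> set_pmf (A xs) \<subseteq> S"
    and len: "length gs \<ge> 2" and gsc: "set gs \<subseteq> carrier G"
  shows "algB G F H act A gs = map_pmf (act (gprod G gs)) (distD G F H act A gs)"
proof -
  interpret N: normal H G by (rule H)
  interpret GA: group_action G S act by (rule act)
  define n where "n = length gs"
  define P where "P = gprod G gs"
  define Hs where "Hs = PiE_dflt {..<n-1} \<one> (\<lambda>_. H)"
  define \<Phi> where "\<Phi> f hs = map (\<lambda>i. if i = 0 then (f \<otimes> gs!0) \<otimes> hs 0
      else if i = n-1 then inv (hs (i-1)) \<otimes> gs!i else inv (hs (i-1)) \<otimes> gs!i \<otimes> hs i) [0..<n]" for f hs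
  define kf where "kf f hs j = (if j = 0 then inv f else if j < n then hs (j-1) else \<one>)" for f hs j
  define D where "D g' = map_pmf (act P) (map_pmf (act (inv (gprod G g'))) (A g'))" for g'
  define kk where "kk f g' = rec_nat (inv f) (\<lambda>i r. inv (gs!i) \<otimes> r \<otimes> (g'!i))" for f g'
  have kk0: "kk f g' 0 = inv f" for f g' by (simp add: kk_def)
  have kkS: "kk f g' (Suc i) = inv (gs!i) \<otimes> kk f g' i \<otimes> (g'!i)" for f g' i by (simp add: kk_def)
  have cancel: "\<And>x y. x \<in> carrier G \<Longrightarrow> y \<in> carrier G \<Longrightarrow> x \<otimes> (inv x \<otimes> y) = y"
    by (simp add: m_assoc[symmetric])
  have cancel2: "\<And>x y. x \<in> carrier G \<Longrightarrow> y \<in> carrier G \<Longrightarrow> inv x \<otimes> (x \<otimes> y) = y"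
    by (simp add: m_assoc[symmetric])
  have n2: "n \<ge> 2" using len n_def by simp
  have gi: "\<And>i. i < n \<Longrightarrow> gs!i \<in> carrier G" using gsc n_def by auto
  have Hc: "H \<subseteq> carrier G" by (rule N.subset)
  have Fc: "F \<subseteq> carrier G" using subgroup.subset[OF F] .
  have finH: "finite H" using fin Hc finite_subset by blast
  have finF: "finite F" using fin Fc finite_subset by blast
  have Fne: "F \<noteq> {}" using subgroup.one_closed[OF F] by auto
  have Hsfin: "finite Hs" unfolding Hs_def using finH by auto
  have oneH: "\<one> \<in> H" using subgroup.one_closed[OF N.subgroup_axioms] .
  have "(\<lambda>_. \<one>) \<in> Hs" unfolding Hs_def PiE_dflt_def using oneH by auto
  then have Hsne: "Hs \<noteq> {}" by blast
  have Pc: "P \<in> carrier G" unfolding P_def gprod_def by (rule foldr_carr) (use gsc in auto)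
  have Peq: "P = foldr (\<lambda>a b. a \<otimes> b) (map (\<lambda>i. gs!i) [0..<0+n]) \<one>"
    unfolding P_def gprod_def n_def by (simp add: map_nth)
  have hsH: "\<And>hs i. hs \<in> Hs \<Longrightarrow> i < n-1 \<Longrightarrow> hs i \<in> H" unfolding Hs_def PiE_dflt_def by auto
  have hs1: "\<And>hs i. hs \<in> Hs \<Longrightarrow> \<not> i < n-1 \<Longrightarrow> hs i = \<one>" unfolding Hs_def PiE_dflt_def by auto
  have kfH: "\<And>f hs j. f \<in> F \<Longrightarrow> hs \<in> Hs \<Longrightarrow> kf f hs j \<in> H"
  proof -
    fix f hs j assume f: "f \<in> F" and hs: "hs \<in> Hs"
    show "kf f hs j \<in> H"
    proof (cases "j = 0")
      case True then show ?thesis using f FH unfolding kf_def by auto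
    next
      case False then show ?thesis using hsH[OF hs, of "j-1"] unfolding kf_def by auto
    qed
  qed
  have kfc: "\<And>f hs j. f \<in> F \<Longrightarrow> hs \<in> Hs \<Longrightarrow> kf f hs j \<in> carrier G" using kfH Hc by blast
  have entry: "\<And>f hs i. f \<in> F \<Longrightarrow> hs \<in> Hs \<Longrightarrow> i < n \<Longrightarrow>
      \<Phi> f hs ! i = inv (kf f hs i) \<otimes> gs!i \<otimes> kf f hs (Suc i)"
  proof -
    fix f hs i assume f: "f \<in> F" and hs: "hs \<in> Hs" and i: "i < n"
    have fc: "f \<in> carrier G" using f Fc by auto
    have hc: "\<And>j. hs j \<in> carrier G" using hsH[OF hs] hs1[OF hs] Hc by (metis one_closed subsetD)
    show "\<Phi> f hs ! i = inv (kf f hs i) \<otimes> gs!i \<otimes> kf f hs (Suc i)"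
    proof (cases "i = 0")
      case True then show ?thesis using n2 fc gi[OF i] hc unfolding \<Phi>_def kf_def by simp
    next
      case False
      show ?thesis
      proof (cases "i = n - 1")
        case True then show ?thesis using False n2 i gi[OF i] hc unfolding \<Phi>_def kf_def by simp
      next
        case False2: False
        have "Suc i < n" using False2 i by arith
        then show ?thesis using False False2 n2 i gi[OF i] hc unfolding \<Phi>_def kf_def by simp
      qed
    qed
  qed
  have lenPhi: "\<And>f hs. length (\<Phi> f hs) = n" unfolding \<Phi>_def by simp
  have PhiEq: "\<And>f hs. f \<in> F \<Longrightarrow> hs \<in> Hs \<Longrightarrow>
      \<Phi> f hs = map (\<lambda>i. inv (kf f hs i) \<otimes> gs!i \<otimes> kf f hs (Suc i)) [0..<0+n]"
  proof -
    fix f hs assume f: "f \<in> F" and hs: "hs \<in> Hs"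
    have "\<Phi> f hs = map (\<lambda>i. \<Phi> f hs ! i) [0..<length (\<Phi> f hs)]" by (simp add: map_nth)
    also have "\<dots> = map (\<lambda>i. inv (kf f hs i) \<otimes> gs!i \<otimes> kf f hs (Suc i)) [0..<0+n]"
      using entry[OF f hs] lenPhi by (intro map_cong) auto
    finally show "\<Phi> f hs = map (\<lambda>i. inv (kf f hs i) \<otimes> gs!i \<otimes> kf f hs (Suc i)) [0..<0+n]" .
  qed
  have prodPhi: "\<And>f hs. f \<in> F \<Longrightarrow> hs \<in> Hs \<Longrightarrow> gprod G (\<Phi> f hs) = f \<otimes> P"
  proof -
    fix f hs assume f: "f \<in> F" and hs: "hs \<in> Hs"
    have fc: "f \<in> carrier G" using f Fc by auto
    have "gprod G (\<Phi> f hs) = inv (kf f hs 0) \<otimes> P \<otimes> kf f hs (0 + n)"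
      unfolding gprod_def PhiEq[OF f hs] Peq
      by (rule tele) (use kfc[OF f hs] gi in auto)
    also have "\<dots> = f \<otimes> P" unfolding kf_def using fc Pc n2 by simp
    finally show "gprod G (\<Phi> f hs) = f \<otimes> P" .
  qed
  have setPhi: "\<And>f hs. f \<in> F \<Longrightarrow> hs \<in> Hs \<Longrightarrow> set (\<Phi> f hs) \<subseteq> carrier G"
    using PhiEq kfc gi by fastforce

  have pi: "Pi_pmf {..<n-1} \<one> (\<lambda>_. pmf_of_set H) = pmf_of_set Hs"
    unfolding Hs_def
    apply (rule Pi_pmf_of_set)
      apply simp
     apply (simp add: finH)
    using oneH apply blast
    done
  have kil: "\<And>f. f \<in> F \<Longrightarrow> kilian G H ((f \<otimes> hd gs) # tl gs) = map_pmf (\<Phi> f) (pmf_of_set Hs)"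
  proof -
    fix f assume f: "f \<in> F"
    obtain g0 rest where gs: "gs = g0 # rest" using len by (cases gs) auto
    have l: "length ((f \<otimes> hd gs) # tl gs) = n" using n_def gs by simp
    show "kilian G H ((f \<otimes> hd gs) # tl gs) = map_pmf (\<Phi> f) (pmf_of_set Hs)"
      unfolding kilian_def l
      apply (subst pi)
      apply (rule map_pmf_cong[OF refl])
      unfolding \<Phi>_def using gs by (intro map_cong) (auto simp: nth_Cons')
  qed
  have L: "algB G F H act A gs = bind_pmf (pmf_of_set F) (\<lambda>f. bind_pmf (pmf_of_set Hs) (\<lambda>hs. D (\<Phi> f hs)))"
    unfolding algB_def
  proof (rule bind_pmf_cong[OF refl])
    fix f assume "f \<in> set_pmf (pmf_of_set F)"
    then have f: "f \<in> F" using finF Fne by simp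
    have fc: "f \<in> carrier G" using f Fc by auto
    show "kilian G H ((f \<otimes> hd gs) # tl gs) \<bind> (\<lambda>gs'. map_pmf (act (inv f)) (A gs')) =
          pmf_of_set Hs \<bind> (\<lambda>hs. D (\<Phi> f hs))"
      unfolding kil[OF f] bind_map_pmf
    proof (rule bind_pmf_cong[OF refl])
      fix hs assume "hs \<in> set_pmf (pmf_of_set Hs)"
      then have hs: "hs \<in> Hs" using Hsfin Hsne by simp
      show "map_pmf (act (inv f)) (A (\<Phi> f hs)) = D (\<Phi> f hs)"
        unfolding D_def map_pmf_comp prodPhi[OF f hs]
      proof (rule map_pmf_cong[OF refl])
        fix x assume "x \<in> set_pmf (A (\<Phi> f hs))"
        then have x: "x \<in> S" using AS[OF setPhi[OF f hs]] by auto
        have "act P (act (inv (f \<otimes> P)) x) = act (P \<otimes> inv (f \<otimes> P)) x"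
          using GA.composition_rule[OF x Pc, of "inv (f \<otimes> P)"] fc Pc by simp
        also have "P \<otimes> inv (f \<otimes> P) = inv f" using fc Pc by (simp add: inv_mult_group cancel)
        finally show "act (inv f) x = act P (act (inv (f \<otimes> P)) x)" by simp
      qed
    qed
  qed
  have recov: "\<And>f hs j. f \<in> F \<Longrightarrow> hs \<in> Hs \<Longrightarrow> j \<le> n \<Longrightarrow> kk f (\<Phi> f hs) j = kf f hs j"
  proof -
    fix f hs j assume f: "f \<in> F" and hs: "hs \<in> Hs"
    show "j \<le> n \<Longrightarrow> kk f (\<Phi> f hs) j = kf f hs j"
    proof (induction j)
      case 0 then show ?case by (simp add: kk0 kf_def)
    next
      case (Suc j)
      then have j: "j < n" by simp
      have "kk f (\<Phi> f hs) (Suc j) = inv (gs!j) \<otimes> kf f hs j \<otimes> (inv (kf f hs j) \<otimes> gs!j \<otimes> kf f hs (Suc j))"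
        using Suc by (simp add: kkS entry[OF f hs j])
      also have "\<dots> = kf f hs (Suc j)" using kfc[OF f hs] gi[OF j]
        by (simp add: m_assoc cancel cancel2)
      finally show ?case .
    qed
  qed
  have inj: "\<And>f. f \<in> F \<Longrightarrow> inj_on (\<Phi> f) Hs"
  proof (rule inj_onI)
    fix f hs hs' assume f: "f \<in> F" and hs: "hs \<in> Hs" and hs': "hs' \<in> Hs" and eq: "\<Phi> f hs = \<Phi> f hs'"
    show "hs = hs'"
    proof
      fix i
      show "hs i = hs' i"
      proof (cases "i < n - 1")
        case True
        have Si: "Suc i < n" using True by arith
        have "hs i = kf f hs (Suc i)" using Si unfolding kf_def by simp
        also have "\<dots> = kk f (\<Phi> f hs) (Suc i)" using recov[OF f hs, of "Suc i"] True by simp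
        also have "\<dots> = kk f (\<Phi> f hs') (Suc i)" using eq by simp
        also have "\<dots> = kf f hs' (Suc i)" using recov[OF f hs', of "Suc i"] True by simp
        also have "\<dots> = hs' i" using Si unfolding kf_def by simp
        finally show ?thesis .
      next
        case False then show ?thesis using hs1[OF hs False] hs1[OF hs' False] by simp
      qed
    qed
  qed
  have disj: "disjoint_family_on (\<lambda>f. \<Phi> f ` Hs) F"
    unfolding disjoint_family_on_def
  proof (intro ballI impI)
    fix f f' assume f: "f \<in> F" and f': "f' \<in> F" and ne: "f \<noteq> f'"
    show "\<Phi> f ` Hs \<inter> \<Phi> f' ` Hs = {}"
    proof (rule ccontr)
      assume "\<Phi> f ` Hs \<inter> \<Phi> f' ` Hs \<noteq> {}"
      then obtain hs hs' where hs: "hs \<in> Hs" and hs': "hs' \<in> Hs" and eq: "\<Phi> f hs = \<Phi> f' hs'" by blast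
      have "f \<otimes> P = f' \<otimes> P" using prodPhi[OF f hs] prodPhi[OF f' hs'] eq by simp
      then have "f = f'" using f f' Fc Pc right_cancel by blast
      then show False using ne by simp
    qed
  qed
  have UN: "(\<Union>f\<in>F. \<Phi> f ` Hs) = kil_tuples G F H gs"
  proof
    show "(\<Union>f\<in>F. \<Phi> f ` Hs) \<subseteq> kil_tuples G F H gs"
    proof clarify
      fix f hs assume f: "f \<in> F" and hs: "hs \<in> Hs"
      have "gprod G (\<Phi> f hs) \<in> F #> gprod G gs"
        unfolding prodPhi[OF f hs] P_def[symmetric] r_coset_def using f by blast
      moreover have "(\<Phi> f hs ! i) <#\<^bsub>G\<^esub> H = (gs ! i) <#\<^bsub>G\<^esub> H" if i: "i < n" for i
      proof -
        have c: "\<Phi> f hs ! i \<in> carrier G" using setPhi[OF f hs] lenPhi i by (metis nth_mem subsetD)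
        have "inv (gs!i) \<otimes> (\<Phi> f hs ! i) = (inv (gs!i) \<otimes> inv (kf f hs i) \<otimes> gs!i) \<otimes> kf f hs (Suc i)"
          using entry[OF f hs i] kfc[OF f hs] gi[OF i] by (simp add: m_assoc)
        also have "\<dots> \<in> H"
          using N.inv_op_closed1[OF gi[OF i], of "inv (kf f hs i)"] kfH[OF f hs]
            subgroup.m_inv_closed[OF N.subgroup_axioms] subgroup.m_closed[OF N.subgroup_axioms] by simp
        finally show ?thesis using lcos_eq_iff[OF N.subgroup_axioms gi[OF i] c] by simp
      qed
      ultimately show "\<Phi> f hs \<in> kil_tuples G F H gs"
        unfolding kil_tuples_def using lenPhi setPhi[OF f hs] n_def by auto
    qed
  next
    show "kil_tuples G F H gs \<subseteq> (\<Union>f\<in>F. \<Phi> f ` Hs)"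
    proof
      fix g' assume "g' \<in> kil_tuples G F H gs"
      then have lg: "length g' = n" and sg: "set g' \<subseteq> carrier G"
        and pg: "gprod G g' \<in> F #> P" and cg: "\<And>i. i < n \<Longrightarrow> (g' ! i) <#\<^bsub>G\<^esub> H = (gs ! i) <#\<^bsub>G\<^esub> H"
        unfolding kil_tuples_def n_def P_def by auto
      obtain f where f: "f \<in> F" and pf: "gprod G g' = f \<otimes> P" using pg unfolding r_coset_def by blast
      have fc: "f \<in> carrier G" using f Fc by auto
      have gc: "\<And>i. i < n \<Longrightarrow> g' ! i \<in> carrier G" using sg lg by (metis nth_mem subsetD)
      have gH: "\<And>i. i < n \<Longrightarrow> inv (gs!i) \<otimes> g' ! i \<in> H"
        using cg gc gi lcos_eq_iff[OF N.subgroup_axioms] by metis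
      define k where "k = kk f g'"
      have kH: "j \<le> n \<Longrightarrow> k j \<in> H" for j
      proof (induction j)
        case 0 then show ?case unfolding k_def kk0 using f FH subgroup.m_inv_closed[OF N.subgroup_axioms] by auto
      next
        case (Suc j)
        then have j: "j < n" by simp
        have kc: "k j \<in> carrier G" using Suc Hc by auto
        have "k (Suc j) = (inv (gs!j) \<otimes> k j \<otimes> gs!j) \<otimes> (inv (gs!j) \<otimes> g' ! j)"
          unfolding k_def kkS using gi[OF j] gc[OF j] kc[unfolded k_def] by (simp add: m_assoc cancel)
        also have "\<dots> \<in> H" using N.inv_op_closed1[OF gi[OF j], of "k j"] Suc gH[OF j]
            subgroup.m_closed[OF N.subgroup_axioms] by simp
        finally show ?case .
      qed
      have kc: "\<And>j. j \<le> n \<Longrightarrow> k j \<in> carrier G" using kH Hc by auto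
      have ent: "\<And>i. i < n \<Longrightarrow> g' ! i = inv (k i) \<otimes> gs!i \<otimes> k (Suc i)"
      proof -
        fix i assume i: "i < n"
        have "inv (k i) \<otimes> gs!i \<otimes> k (Suc i) = inv (k i) \<otimes> gs!i \<otimes> (inv (gs!i) \<otimes> k i \<otimes> g' ! i)"
          unfolding k_def kkS ..
        also have "\<dots> = g' ! i" using kc[of i] i gi[OF i] gc[OF i] by (simp add: m_assoc cancel cancel2)
        finally show "g' ! i = inv (k i) \<otimes> gs!i \<otimes> k (Suc i)" by simp
      qed
      have "g' = map (\<lambda>i. g' ! i) [0..<length g']" by (simp add: map_nth)
      also have "\<dots> = map (\<lambda>i. inv (k i) \<otimes> gs!i \<otimes> k (Suc i)) [0..<0+n]"
        using ent lg by (intro map_cong) auto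
      finally have g'eq: "g' = map (\<lambda>i. inv (k i) \<otimes> gs!i \<otimes> k (Suc i)) [0..<0+n]" .
      have "gprod G g' = inv (k 0) \<otimes> P \<otimes> k (0 + n)"
        unfolding gprod_def Peq by (subst g'eq, rule tele) (use kc gi in auto)
      then have "f \<otimes> P = inv (k 0) \<otimes> P \<otimes> k (0 + n)" using pf by simp
      also have "\<dots> = f \<otimes> P \<otimes> k n" unfolding k_def kk0 using fc by simp
      finally have "f \<otimes> P = f \<otimes> P \<otimes> k n" .
      then have kn: "k n = \<one>" using fc Pc kc[of n] l_cancel_one'[of "f \<otimes> P" "k n"] by simp
      define hs where "hs i = (if i < n - 1 then k (Suc i) else \<one>)" for i
      have hs: "hs \<in> Hs" unfolding Hs_def PiE_dflt_def hs_def using kH by auto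
      have kfk: "j \<le> n \<Longrightarrow> kf f hs j = k j" for j
        unfolding kf_def hs_def using kn by (auto simp: k_def kk0)
      have "\<Phi> f hs = g'"
      proof (rule nth_equalityI)
        show "length (\<Phi> f hs) = length g'" using lenPhi lg by simp
        fix i assume "i < length (\<Phi> f hs)"
        then have i: "i < n" using lenPhi by simp
        show "\<Phi> f hs ! i = g' ! i" using entry[OF f hs i] kfk[of i] kfk[of "Suc i"] i ent[OF i] by simp
      qed
      then show "g' \<in> (\<Union>f\<in>F. \<Phi> f ` Hs)" using f hs by blast
    qed
  qed
  have "bind_pmf (pmf_of_set F) (\<lambda>f. bind_pmf (pmf_of_set Hs) (\<lambda>hs. D (\<Phi> f hs)))
      = bind_pmf (pmf_of_set F) (\<lambda>f. bind_pmf (pmf_of_set (\<Phi> f ` Hs)) D)"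
  proof (rule bind_pmf_cong[OF refl])
    fix f assume "f \<in> set_pmf (pmf_of_set F)"
    then have f: "f \<in> F" using finF Fne by simp
    show "bind_pmf (pmf_of_set Hs) (\<lambda>hs. D (\<Phi> f hs)) = bind_pmf (pmf_of_set (\<Phi> f ` Hs)) D"
      using map_pmf_of_set_inj[OF inj[OF f] Hsne Hsfin] bind_map_pmf[of "\<Phi> f" "pmf_of_set Hs" D] by simp
  qed
  also have "\<dots> = bind_pmf (bind_pmf (pmf_of_set F) (\<lambda>f. pmf_of_set (\<Phi> f ` Hs))) D"
    by (simp add: bind_assoc_pmf)
  also have "bind_pmf (pmf_of_set F) (\<lambda>f. pmf_of_set (\<Phi> f ` Hs)) = pmf_of_set (\<Union>f\<in>F. \<Phi> f ` Hs)"
    by (rule pmf_of_set_UN[symmetric]) (use finF Hsfin Fne Hsne disj inj card_image in auto)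
  finally have "algB G F H act A gs = bind_pmf (pmf_of_set (kil_tuples G F H gs)) D"
    using L UN by simp
  then show ?thesis unfolding distD_def D_def P_def map_bind_pmf by simp
qed

end

theorem mainTheorem7:
  fixes G :: "('g, 'b) monoid_scheme" and S :: "'s set" and act :: "'g \<Rightarrow> 's \<Rightarrow> 's"
    and F H :: "'g set" and A :: "'g list \<Rightarrow> 's pmf" and gs :: "'g list"
  assumes "group G" and "finite (carrier G)"
    and "group_action G S act"
    and "subgroup F G" and "F \<subseteq> H" and "H \<lhd> G"
    and "\<And>xs. set xs \<subseteq> carrier G \<Longrightarrow> set_pmf (A xs) \<subseteq> S"
    and "length gs \<ge> 2" and "set gs \<subseteq> carrier G"
  shows "algB G F H act A gs = map_pmf (act (gprod G gs)) (distD G F H act A gs)"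
  using group.main_aux[OF assms] .

end
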